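(* Let $d\ge2$, $0<\alpha\le2$ and $T\in\mathring{H}^{-\alpha/2}(\mathbb{R}^d)\cap L^1_{loc}(\mathbb{R}^d)$ with $T\ge0$. Then $(I_\alpha*T)(x)<\infty$ for a.e. $x\in\mathbb{R}^d$; equivalently $\int_{\mathbb{R}^d}T(x)(1+|x|)^{-(d-\alpha)}dx<\infty$.
   Context: $I_\alpha(x)=A_\alpha|x|^{-(d-\alpha)}$, $A_\alpha=\frac{\Gamma(\frac{d-\alpha}{2})}{\Gamma(\frac\alpha2)\pi^{d/2}2^\alpha}$. $\mathring{H}^{-\alpha/2}(\mathbb{R}^d)$: tempered distributions $\rho$ with $\hat\rho\in L^1_{loc}$ and $\int(2\pi|\xi|)^{-\alpha}|\hat\rho(\xi)|^2d\xi<\infty$. $T\in\mathring{H}^{-\alpha/2}\cap L^1_{loc}$ means the distribution is given by integration against an $L^1_{loc}$ function $T$. *)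

theory Defs
  imports "HOL-Analysis.Analysis"
begin

definition riesz_const :: "nat \<Rightarrow> real \<Rightarrow> real" where
  "riesz_const d \<alpha> = Gamma ((real d - \<alpha>) / 2) / (Gamma (\<alpha> / 2) * pi powr (real d / 2) * 2 powr \<alpha>)"

definition riesz_kernel :: "real \<Rightarrow> 'a::euclidean_space \<Rightarrow> real" where
  "riesz_kernel \<alpha> x = riesz_const DIM('a) \<alpha> * norm x powr (-(real DIM('a) - \<alpha>))"

fun iter_dderiv :: "'a::euclidean_space list \<Rightarrow> ('a \<Rightarrow> complex) \<Rightarrow> 'a \<Rightarrow> complex" where
  "iter_dderiv [] f = f"
| "iter_dderiv (v # vs) f = (\<lambda>x. frechet_derivative (iter_dderiv vs f) (at x) v)"

definition schwartz :: "('a::euclidean_space \<Rightarrow> complex) set" where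
  "schwartz = {f. (\<forall>vs. set vs \<subseteq> Basis \<longrightarrow>
        (\<forall>x. iter_dderiv vs f differentiable (at x)) \<and>
        (\<forall>N::nat. \<exists>C. \<forall>x. (1 + norm x) ^ N * norm (iter_dderiv vs f x) \<le> C))}"

text \<open>Fourier transform with the convention hat f(xi) = int f(x) e^{-2 pi i x.xi} dx.\<close>
definition fourier :: "('a::euclidean_space \<Rightarrow> complex) \<Rightarrow> 'a \<Rightarrow> complex" where
  "fourier f \<xi> = (\<integral>x. f x * exp (- (2 * pi * \<i>) * complex_of_real (x \<bullet> \<xi>)) \<partial>lborel)"

definition locally_integrable :: "('a::euclidean_space \<Rightarrow> 'b::{banach, second_countable_topology}) \<Rightarrow> bool" where
  "locally_integrable f \<longleftrightarrow> f \<in> borel_measurable lborel \<and>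
     (\<forall>K. compact K \<longrightarrow> set_integrable lborel K f)"

text \<open>T (an L^1_loc function, viewed as a tempered distribution) lies in the homogeneous
  Sobolev space of order -alpha/2: its distributional Fourier transform is an L^1_loc
  function g, i.e. <T, hat phi> = <g, phi> for all Schwartz phi, and
  int (2 pi |xi|)^{-alpha} |g xi|^2 d xi < infinity.\<close>
definition in_homog_sobolev_neg :: "real \<Rightarrow> ('a::euclidean_space \<Rightarrow> real) \<Rightarrow> bool" where
  "in_homog_sobolev_neg \<alpha> T \<longleftrightarrow>
     (\<forall>\<phi>\<in>schwartz. integrable lborel (\<lambda>x. complex_of_real (T x) * \<phi> x)) \<and>
     (\<exists>g :: 'a \<Rightarrow> complex. locally_integrable g \<and>
        (\<forall>\<phi>\<in>schwartz. integrable lborel (\<lambda>\<xi>. g \<xi> * \<phi> \<xi>) \<and>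
           (\<integral>x. complex_of_real (T x) * fourier \<phi> x \<partial>lborel) = (\<integral>\<xi>. g \<xi> * \<phi> \<xi> \<partial>lborel)) \<and>
        (\<integral>\<^sup>+\<xi>. ennreal ((2 * pi * norm \<xi>) powr (-\<alpha>) * (cmod (g \<xi>))\<^sup>2) \<partial>lborel) < \<infinity>)"

end

theory Submission
  imports Defs "HOL-Probability.Probability" "HOL-Real_Asymp.Real_Asymp"
begin


lemma gauss1d:
  fixes a w :: real assumes a: "a > 0"
  shows "(\<integral>t. complex_of_real (exp (-pi*a*t^2)) * exp (- (2 * pi * \<i>) * complex_of_real (t * w)) \<partial>lborel)
         = complex_of_real (exp (-pi*w^2/a) / sqrt a)"
proof -
  define c where "c = sqrt (2*pi*a)"
  have c: "c > 0" using a by (simp add: c_def)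
  define \<theta> where "\<theta> = -2*pi*w/c"
  have "char std_normal_distribution \<theta> = (\<integral>u. complex_of_real (std_normal_density u) * iexp (\<theta>*u) \<partial>lborel)"
    unfolding char_def by (subst integral_density) (auto simp: normal_density_nonneg scaleR_conv_of_real)
  also have "\<dots> = c *\<^sub>R (\<integral>t. complex_of_real (std_normal_density (0 + c*t)) * iexp (\<theta>*(0 + c*t)) \<partial>lborel)"
    using c by (subst lborel_integral_real_affine[where c=c and t=0]) auto
  also have "(\<lambda>t. complex_of_real (std_normal_density (0 + c*t)) * iexp (\<theta>*(0 + c*t)))
      = (\<lambda>t. complex_of_real (1/sqrt(2*pi)) * (complex_of_real (exp (-pi*a*t^2)) * exp (- (2 * pi * \<i>) * complex_of_real (t * w))))"
  proof
    fix t
    have e1: "exp (-((c*t)^2) / 2) = exp (-pi*a*t^2)" using a by (simp add: c_def power_mult_distrib)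
    have e2: "\<i> * complex_of_real (\<theta> * (c*t)) = - (2 * pi * \<i>) * complex_of_real (t * w)"
      using c by (simp add: \<theta>_def field_simps)
    show "complex_of_real (std_normal_density (0 + c*t)) * iexp (\<theta>*(0 + c*t)) = complex_of_real (1/sqrt(2*pi)) * (complex_of_real (exp (-pi*a*t^2)) * exp (- (2 * pi * \<i>) * complex_of_real (t * w)))"
      unfolding normal_density_def using e1 e2 by (simp add: )
  qed
  finally have "char std_normal_distribution \<theta> = c *\<^sub>R (complex_of_real (1/sqrt(2*pi)) * (\<integral>t. complex_of_real (exp (-pi*a*t^2)) * exp (- (2 * pi * \<i>) * complex_of_real (t * w)) \<partial>lborel))"
    by simp
  moreover have "char std_normal_distribution \<theta> = exp (-pi*w^2/a)"
    using c a by (simp add: char_std_normal_distribution \<theta>_def c_def power_divide power_mult_distrib power2_eq_square field_simps)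
  ultimately have "complex_of_real (exp (-pi*w^2/a)) = complex_of_real (c/sqrt(2*pi)) * (\<integral>t. complex_of_real (exp (-pi*a*t^2)) * exp (- (2 * pi * \<i>) * complex_of_real (t * w)) \<partial>lborel)"
    by (simp add: scaleR_conv_of_real)
  moreover have "c/sqrt(2*pi) = sqrt a" using a by (simp add: c_def real_sqrt_mult)
  ultimately show ?thesis using a by (simp add: field_simps)
qed


lemma gauss1d_int:
  fixes a :: real assumes a: "a > 0"
  shows "integrable lborel (\<lambda>t. exp (-pi*a*t^2))" "(\<integral>t. exp (-pi*a*t^2) \<partial>lborel) = 1 / sqrt a"
proof -
  define \<sigma> where "\<sigma> = sqrt (1/(2*pi*a))"
  have s: "\<sigma> > 0" using a by (simp add: \<sigma>_def)
  have s2: "\<sigma>^2 = 1/(2*pi*a)" using a by (simp add: \<sigma>_def)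
  have eq: "(\<lambda>t. exp (-pi*a*t^2)) = (\<lambda>t. sqrt (2*pi*\<sigma>^2) * normal_density 0 \<sigma> t)"
  proof
    fix t
    have "- ((t - 0)\<^sup>2) / (2 * \<sigma>\<^sup>2) = -pi*a*t^2" using a by (simp add: s2 field_simps)
    moreover have "sqrt (2*pi*\<sigma>^2) > 0" using s by simp
    ultimately show "exp (-pi*a*t^2) = sqrt (2*pi*\<sigma>^2) * normal_density 0 \<sigma> t"
      unfolding normal_density_def using s by simp
  qed
  show "integrable lborel (\<lambda>t. exp (-pi*a*t^2))" unfolding eq using s by (intro integrable_mult_right integrable_normal_density) auto
  have "sqrt (2*pi*\<sigma>^2) = 1/sqrt a" using a by (simp add: s2 real_sqrt_divide)
  then show "(\<integral>t. exp (-pi*a*t^2) \<partial>lborel) = 1 / sqrt a" unfolding eq using s by simp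
qed

lemma gauss1d_nn:
  fixes a :: real assumes a: "a > 0"
  shows "(\<integral>\<^sup>+t. ennreal (exp (-pi*a*t^2)) \<partial>lborel) = ennreal (1 / sqrt a)"
  using gauss1d_int[OF a] by (subst nn_integral_eq_integral) auto

lemma norm_sq_basis: "(norm (x::'a::euclidean_space))^2 = (\<Sum>b\<in>Basis. (x \<bullet> b)^2)"
  unfolding power2_norm_eq_inner by (subst euclidean_inner) (simp add: power2_eq_square)

lemma gauss_prod: "exp (-pi*a*(norm (x::'a::euclidean_space))^2) = (\<Prod>b\<in>Basis. exp (-pi*a*(x\<bullet>b)^2))"
  unfolding norm_sq_basis by (simp add: sum_distrib_left exp_sum[symmetric] sum_negf)

lemma gauss_nn:
  fixes a :: real assumes a: "a > 0"
  shows "(\<integral>\<^sup>+x. ennreal (exp (-pi*a*(norm (x::'a::euclidean_space))^2)) \<partial>lborel) = ennreal ((1 / sqrt a)^DIM('a))"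
proof -
  have "(\<integral>\<^sup>+x. ennreal (exp (-pi*a*(norm (x::'a))^2)) \<partial>lborel)
     = (\<integral>\<^sup>+x. (\<Prod>b\<in>Basis. ennreal (exp (-pi*a*((x::'a)\<bullet>b)^2))) \<partial>lborel)"
    by (subst gauss_prod) (simp add: prod_ennreal)
  also have "\<dots> = (\<Prod>b\<in>(Basis::'a set). (\<integral>\<^sup>+t. ennreal (exp (-pi*a*t^2)) \<partial>lborel))"
    by (rule nn_integral_lborel_prod[where f="\<lambda>b t. ennreal (exp (-pi*a*t^2))"]) auto
  also have "\<dots> = ennreal ((1 / sqrt a)^DIM('a))"
    using a by (simp only: gauss1d_nn[OF a] prod_constant) (intro ennreal_power, simp)
  finally show ?thesis .
qed


lemma exp_imag_prod:
  "exp (- (2 * pi * \<i>) * complex_of_real ((y::'a::euclidean_space) \<bullet> x))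
   = (\<Prod>b\<in>Basis. exp (- (2 * pi * \<i>) * complex_of_real ((y \<bullet> b) * (x \<bullet> b))))"
proof -
  have "y \<bullet> x = (\<Sum>b\<in>Basis. (y \<bullet> b) * (x \<bullet> b))" by (subst euclidean_inner) simp
  then show ?thesis by (simp add: exp_sum[symmetric] sum_distrib_left)
qed

lemma h_integrable:
  assumes a: "a > 0"
  shows "integrable lborel (\<lambda>t. complex_of_real (exp (-pi*a*t^2)) * exp (- (2 * pi * \<i>) * complex_of_real (t * s)))"
proof (rule Bochner_Integration.integrable_bound[OF gauss1d_int(1)[OF a]])
  show "(\<lambda>t. complex_of_real (exp (-pi*a*t^2)) * exp (- (2 * pi * \<i>) * complex_of_real (t * s))) \<in> borel_measurable lborel"
    by measurable
  show "AE t in lborel. norm (complex_of_real (exp (-pi*a*t^2)) * exp (- (2 * pi * \<i>) * complex_of_real (t * s))) \<le> norm (exp (-pi*a*t^2))"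
    by (simp add: norm_mult norm_exp_eq_Re)
qed

lemma fourier_gauss:
  fixes x :: "'a::euclidean_space" assumes a: "a > 0"
  shows "fourier (\<lambda>\<xi>. complex_of_real (exp (-pi*a*(norm \<xi>)^2))) x
        = complex_of_real ((1/sqrt a)^DIM('a) * exp (-pi*(norm x)^2/a))"
proof -
  interpret P: product_sigma_finite "\<lambda>_::'a. lborel :: real measure"
    by (simp add: product_sigma_finite_def sigma_finite_lborel)
  define h where "h = (\<lambda>b t. complex_of_real (exp (-pi*a*t^2)) * exp (- (2 * pi * \<i>) * complex_of_real (t * (x \<bullet> b))))"
  have hm[measurable]: "h b \<in> borel_measurable borel" for b unfolding h_def by measurable
  have eq: "(\<lambda>\<xi>. complex_of_real (exp (-pi*a*(norm \<xi>)^2)) * exp (- (2 * pi * \<i>) * complex_of_real (\<xi> \<bullet> x)))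
      = (\<lambda>\<xi>. \<Prod>b\<in>Basis. h b (\<xi> \<bullet> b))"
  proof
    fix \<xi> :: 'a
    show "complex_of_real (exp (-pi*a*(norm \<xi>)^2)) * exp (- (2 * pi * \<i>) * complex_of_real (\<xi> \<bullet> x)) = (\<Prod>b\<in>Basis. h b (\<xi> \<bullet> b))"
      by (simp only: h_def prod.distrib gauss_prod[of a \<xi>] exp_imag_prod[of \<xi> x] of_real_prod)
  qed
  have "fourier (\<lambda>\<xi>. complex_of_real (exp (-pi*a*(norm \<xi>)^2))) x = (\<integral>\<xi>. (\<Prod>b\<in>Basis. h b (\<xi> \<bullet> b)) \<partial>lborel)"
    unfolding fourier_def eq ..
  also have "\<dots> = (\<integral>f. (\<Prod>b\<in>Basis. h b ((\<Sum>b'\<in>Basis. f b' *\<^sub>R b') \<bullet> b)) \<partial>(\<Pi>\<^sub>M b\<in>Basis. lborel))"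
    by (subst lborel_eq) (subst integral_distr, auto)
  also have "\<dots> = (\<integral>f. (\<Prod>b\<in>Basis. h b (f b)) \<partial>(\<Pi>\<^sub>M b\<in>Basis. lborel))"
    by (intro Bochner_Integration.integral_cong refl prod.cong) (auto simp: inner_sum_left inner_Basis if_distrib sum.delta cong: if_cong)
  also have "\<dots> = (\<Prod>b\<in>(Basis::'a set). integral\<^sup>L lborel (h b))"
    by (rule P.product_integral_prod) (simp, unfold h_def, rule h_integrable[OF a])
  also have "\<dots> = (\<Prod>b\<in>(Basis::'a set). complex_of_real (exp (-pi*(x\<bullet>b)^2/a) / sqrt a))"
    by (intro prod.cong refl) (unfold h_def, rule gauss1d[OF a])
  also have "\<dots> = complex_of_real ((1/sqrt a)^DIM('a) * exp (-pi*(norm x)^2/a))"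
  proof -
    have e: "exp (-pi*(norm x)^2/a) = (\<Prod>b\<in>(Basis::'a set). exp (-pi*(x\<bullet>b)^2/a))"
      using gauss_prod[of "1/a" x] by simp
    have "(\<Prod>b\<in>(Basis::'a set). exp (-pi*(x\<bullet>b)^2/a) / sqrt a) = (\<Prod>b\<in>(Basis::'a set). exp (-pi*(x\<bullet>b)^2/a)) * (1/sqrt a)^DIM('a)"
      by (simp add: prod.distrib divide_inverse prod_constant power_one_over)
    then show ?thesis unfolding of_real_prod[symmetric] e by (simp add: mult.commute)
  qed
  finally show ?thesis .
qed


inductive_set polys :: "('a::euclidean_space \<Rightarrow> real) set" where
  pconst: "(\<lambda>x. c) \<in> polys"
| plin: "(\<lambda>x. x \<bullet> w) \<in> polys"
| padd: "p \<in> polys \<Longrightarrow> q \<in> polys \<Longrightarrow> (\<lambda>x. p x + q x) \<in> polys"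
| pmul: "p \<in> polys \<Longrightarrow> q \<in> polys \<Longrightarrow> (\<lambda>x. p x * q x) \<in> polys"

lemma poly_deriv:
  assumes "p \<in> polys"
  shows "\<exists>D. (\<forall>x. (p has_derivative (\<lambda>v. D v x)) (at x)) \<and> (\<forall>v. D v \<in> polys)"
  using assms
proof induction
  case (pconst c)
  show ?case by (rule exI[of _ "\<lambda>v x. 0"]) (auto intro: polys.pconst)
next
  case (plin w)
  show ?case by (rule exI[of _ "\<lambda>v x. v \<bullet> w"]) (auto intro!: polys.pconst derivative_eq_intros)
next
  case (padd p q)
  then obtain Dp Dq where p: "\<forall>x. (p has_derivative (\<lambda>v. Dp v x)) (at x)" "\<forall>v. Dp v \<in> polys"
    and q: "\<forall>x. (q has_derivative (\<lambda>v. Dq v x)) (at x)" "\<forall>v. Dq v \<in> polys" by blast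
  show ?case by (rule exI[of _ "\<lambda>v x. Dp v x + Dq v x"]) (use p q in \<open>auto intro!: polys.padd has_derivative_add\<close>)
next
  case (pmul p q)
  then obtain Dp Dq where p: "\<forall>x. (p has_derivative (\<lambda>v. Dp v x)) (at x)" "\<forall>v. Dp v \<in> polys"
    and q: "\<forall>x. (q has_derivative (\<lambda>v. Dq v x)) (at x)" "\<forall>v. Dq v \<in> polys" by blast
  show ?case
  proof (rule exI[of _ "\<lambda>v x. p x * Dq v x + Dp v x * q x"], intro conjI allI)
    fix x show "((\<lambda>x. p x * q x) has_derivative (\<lambda>v. p x * Dq v x + Dp v x * q x)) (at x)"
      using p q by (auto intro: has_derivative_mult)
  next
    fix v show "(\<lambda>x. p x * Dq v x + Dp v x * q x) \<in> polys"
      using p q pmul by (auto intro!: polys.padd polys.pmul)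
  qed
qed

lemma poly_bound:
  assumes "p \<in> polys"
  shows "\<exists>C k. C \<ge> 0 \<and> (\<forall>x. \<bar>p x\<bar> \<le> C * (1 + norm x)^k)"
  using assms
proof induction
  case (pconst c)
  show ?case by (rule exI[of _ "\<bar>c\<bar>"], rule exI[of _ 0]) auto
next
  case (plin w)
  show ?case
  proof (rule exI[of _ "norm w"], rule exI[of _ 1], intro conjI allI)
    fix x :: 'a
    have "\<bar>x \<bullet> w\<bar> \<le> norm x * norm w" by (rule Cauchy_Schwarz_ineq2)
    also have "\<dots> \<le> norm w * (1 + norm x)^1" by (simp add: mult.commute mult_left_mono)
    finally show "\<bar>x \<bullet> w\<bar> \<le> norm w * (1 + norm x)^1" .
  qed simp
next
  case (padd p q)
  then obtain Cp kp Cq kq where p: "Cp \<ge> 0" "\<forall>x. \<bar>p x\<bar> \<le> Cp * (1 + norm x)^kp"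
    and q: "Cq \<ge> 0" "\<forall>x. \<bar>q x\<bar> \<le> Cq * (1 + norm x)^kq" by blast
  show ?case
  proof (rule exI[of _ "Cp + Cq"], rule exI[of _ "kp + kq"], intro conjI allI)
    fix x :: 'a
    have 1: "(1 + norm x)^kp \<le> (1 + norm x)^(kp+kq)" "(1 + norm x)^kq \<le> (1 + norm x)^(kp+kq)"
      by (auto intro!: power_increasing)
    have "\<bar>p x + q x\<bar> \<le> Cp * (1 + norm x)^kp + Cq * (1 + norm x)^kq"
      using p(2) q(2) by (smt (verit))
    also have "\<dots> \<le> (Cp + Cq) * (1 + norm x)^(kp+kq)"
      using mult_left_mono[OF 1(1) p(1)] mult_left_mono[OF 1(2) q(1)] by (simp add: distrib_right)
    finally show "\<bar>p x + q x\<bar> \<le> (Cp + Cq) * (1 + norm x)^(kp+kq)" .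
  qed (use p q in simp)
next
  case (pmul p q)
  then obtain Cp kp Cq kq where p: "Cp \<ge> 0" "\<forall>x. \<bar>p x\<bar> \<le> Cp * (1 + norm x)^kp"
    and q: "Cq \<ge> 0" "\<forall>x. \<bar>q x\<bar> \<le> Cq * (1 + norm x)^kq" by blast
  show ?case
  proof (rule exI[of _ "Cp * Cq"], rule exI[of _ "kp + kq"], intro conjI allI)
    fix x :: 'a
    have "\<bar>p x * q x\<bar> = \<bar>p x\<bar> * \<bar>q x\<bar>" by (simp add: abs_mult)
    also have "\<dots> \<le> (Cp * (1 + norm x)^kp) * (Cq * (1 + norm x)^kq)"
      using p q by (intro mult_mono) auto
    also have "\<dots> = (Cp * Cq) * (1 + norm x)^(kp+kq)" by (simp add: power_add algebra_simps)
    finally show "\<bar>p x * q x\<bar> \<le> (Cp * Cq) * (1 + norm x)^(kp+kq)" .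
  qed (use p q in simp)
qed

lemma gauss_poly_bound:
  assumes a: "a > 0"
  shows "\<exists>M. \<forall>r\<ge>0. (1 + r)^m * exp (-pi*a*r^2) \<le> (M::real)"
proof -
  have "((\<lambda>r. (1 + r)^m * exp (-pi*a*r^2)) \<longlongrightarrow> 0) at_top"
    using a by real_asymp
  then have "eventually (\<lambda>r. (1 + r)^m * exp (-pi*a*r^2) \<le> 1) at_top"
    by (rule eventually_mono[OF order_tendstoD(2)[OF _ zero_less_one]]) auto
  then obtain R where R: "\<And>r. r \<ge> R \<Longrightarrow> (1 + r)^m * exp (-pi*a*r^2) \<le> 1"
    by (auto simp: eventually_at_top_linorder)
  show ?thesis
  proof (rule exI[of _ "max 1 ((1 + \<bar>R\<bar>)^m)"], intro allI impI)
    fix r :: real assume r: "r \<ge> 0"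
    show "(1 + r)^m * exp (-pi*a*r^2) \<le> max 1 ((1 + \<bar>R\<bar>)^m)"
    proof (cases "r \<ge> R")
      case True then show ?thesis by (intro max.coboundedI1 R)
    next
      case False
      have "(1 + r)^m * exp (-pi*a*r^2) \<le> (1 + \<bar>R\<bar>)^m * 1"
        using False r a by (intro mult_mono power_mono) auto
      then show ?thesis by simp
    qed
  qed
qed


lemma polys_sum: "finite A \<Longrightarrow> (\<forall>i\<in>A. f i \<in> polys) \<Longrightarrow> (\<lambda>x. \<Sum>i\<in>A. f i x) \<in> polys"
proof (induction A rule: finite_induct)
  case empty then show ?case using polys.pconst[of 0] by simp
next
  case (insert i A) then show ?case by (auto intro!: polys.padd)
qed

lemma polys_sq: "(\<lambda>x::'a::euclidean_space. -pi*a*(x \<bullet> x)) \<in> polys"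
proof -
  have "(\<lambda>x::'a. \<Sum>b\<in>Basis. (x \<bullet> b) * (x \<bullet> b)) \<in> polys"
    by (rule polys_sum) (auto intro!: polys.pmul polys.plin)
  moreover have "(\<lambda>x::'a. \<Sum>b\<in>Basis. (x \<bullet> b) * (x \<bullet> b)) = (\<lambda>x. x \<bullet> x)"
    by (rule ext, subst (3) euclidean_inner) simp
  ultimately show ?thesis using polys.pmul[OF polys.pconst[of "-pi*a"]] by auto
qed

lemma gauss_schwartz:
  assumes a: "a > 0"
  shows "(\<lambda>\<xi>::'a::euclidean_space. complex_of_real (c * exp (-pi*a*(norm \<xi>)^2))) \<in> schwartz"
proof -
  define \<psi> where "\<psi> = (\<lambda>x::'a. -pi*a*(x \<bullet> x))"
  have \<psi>p: "\<psi> \<in> polys" unfolding \<psi>_def by (rule polys_sq)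
  obtain D\<psi> where D\<psi>: "\<And>x. (\<psi> has_derivative (\<lambda>v. D\<psi> v x)) (at x)" "\<And>v. D\<psi> v \<in> polys"
    using poly_deriv[OF \<psi>p] by blast
  define F where "F = (\<lambda>p x. complex_of_real (p x * exp (\<psi> x)))"
  have step: "\<exists>Q. (\<forall>v. Q v \<in> polys) \<and> (\<forall>x. (F p has_derivative (\<lambda>v. F (Q v) x)) (at x))"
    if p: "p \<in> polys" for p
  proof -
    obtain Dp where Dp: "\<And>x. (p has_derivative (\<lambda>v. Dp v x)) (at x)" "\<And>v. Dp v \<in> polys"
      using poly_deriv[OF p] by blast
    show ?thesis
    proof (rule exI[of _ "\<lambda>v x. Dp v x + p x * D\<psi> v x"], intro conjI allI)
      fix v show "(\<lambda>x. Dp v x + p x * D\<psi> v x) \<in> polys"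
        using Dp D\<psi> p by (auto intro!: polys.padd polys.pmul)
    next
      fix x
      have h1: "((\<lambda>x. exp (\<psi> x)) has_derivative (\<lambda>v. D\<psi> v x * exp (\<psi> x))) (at x)"
        by (rule DERIV_compose_FDERIV[OF DERIV_exp D\<psi>(1)])
      have h2: "((\<lambda>x. p x * exp (\<psi> x)) has_derivative (\<lambda>v. p x * (D\<psi> v x * exp (\<psi> x)) + Dp v x * exp (\<psi> x))) (at x)"
        by (rule has_derivative_mult[OF Dp(1) h1])
      have h3: "(F p has_derivative (\<lambda>v. complex_of_real (p x * (D\<psi> v x * exp (\<psi> x)) + Dp v x * exp (\<psi> x)))) (at x)"
        unfolding F_def by (rule has_derivative_of_real[OF h2])
      show "(F p has_derivative (\<lambda>v. F (\<lambda>x. Dp v x + p x * D\<psi> v x) x)) (at x)"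
        by (rule has_derivative_eq_rhs[OF h3]) (auto simp: F_def algebra_simps)
    qed
  qed
  have iter: "\<exists>q\<in>polys. iter_dderiv vs (F p0) = F q" if p0: "p0 \<in> polys" for p0 vs
  proof (induction vs)
    case Nil then show ?case using p0 by auto
  next
    case (Cons v vs)
    then obtain q where q: "q \<in> polys" "iter_dderiv vs (F p0) = F q" by blast
    obtain Q where Q: "\<And>v. Q v \<in> polys" "\<And>x. (F q has_derivative (\<lambda>v. F (Q v) x)) (at x)"
      using step[OF q(1)] by blast
    have "iter_dderiv (v # vs) (F p0) = F (Q v)"
      using frechet_derivative_at[OF Q(2)] by (auto simp: q(2) fun_eq_iff)
    then show ?case using Q(1) by blast
  qed
  have feq: "(\<lambda>\<xi>::'a. complex_of_real (c * exp (-pi*a*(norm \<xi>)^2))) = F (\<lambda>x. c)"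
    by (auto simp: F_def \<psi>_def power2_norm_eq_inner)
  show ?thesis unfolding schwartz_def
  proof (intro CollectI allI impI conjI)
    fix vs :: "'a list" and x :: 'a
    obtain q where q: "q \<in> polys" "iter_dderiv vs (F (\<lambda>x. c)) = F q"
      using iter[OF polys.pconst] by blast
    show "iter_dderiv vs (\<lambda>\<xi>. complex_of_real (c * exp (- pi * a * (norm \<xi>)\<^sup>2))) differentiable at x"
      unfolding feq q(2) using step[OF q(1)] by (auto simp: differentiable_def)
  next
    fix vs :: "'a list" and N :: nat
    obtain q where q: "q \<in> polys" "iter_dderiv vs (F (\<lambda>x. c)) = F q"
      using iter[OF polys.pconst] by blast
    obtain C k where Ck: "C \<ge> 0" "\<And>x. \<bar>q x\<bar> \<le> C * (1 + norm x)^k"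
      using poly_bound[OF q(1)] by blast
    obtain M where M: "\<And>r. r \<ge> 0 \<Longrightarrow> (1 + r)^(N+k) * exp (-pi*a*r^2) \<le> M"
      using gauss_poly_bound[OF a, of "N+k"] by blast
    show "\<exists>C. \<forall>x. (1 + norm x) ^ N * cmod (iter_dderiv vs (\<lambda>\<xi>. complex_of_real (c * exp (- pi * a * (norm \<xi>)\<^sup>2))) x) \<le> C"
    proof (rule exI[of _ "C * M"], intro allI)
      fix x :: 'a
      have "(1 + norm x) ^ N * cmod (F q x) = (1 + norm x) ^ N * (\<bar>q x\<bar> * exp (-pi*a*(norm x)^2))"
        by (simp add: F_def \<psi>_def power2_norm_eq_inner abs_mult norm_mult del: of_real_mult)
      also have "\<dots> \<le> (1 + norm x) ^ N * ((C * (1 + norm x)^k) * exp (-pi*a*(norm x)^2))"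
        using Ck(2)[of x] by (intro mult_left_mono mult_right_mono) auto
      also have "\<dots> = C * ((1 + norm x)^(N+k) * exp (-pi*a*(norm x)^2))"
        by (simp add: power_add algebra_simps)
      also have "\<dots> \<le> C * M" using M[of "norm x"] Ck(1) by (intro mult_left_mono) auto
      finally show "(1 + norm x) ^ N * cmod (iter_dderiv vs (\<lambda>\<xi>. complex_of_real (c * exp (- pi * a * (norm \<xi>)\<^sup>2))) x) \<le> C * M"
        unfolding feq q(2) .
    qed
  qed
qed


lemma pw_bound:
  fixes l r \<alpha> :: real
  assumes l: "l > 0" and r: "r \<ge> 0" and \<alpha>: "0 < \<alpha>" "\<alpha> \<le> 2"
  shows "(2*pi*r) powr \<alpha> * exp (-pi*l^2*r^2) \<le> l powr (-\<alpha>) * (1 + 4*pi)"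
proof -
  define u where "u = 2*pi*l*r"
  have u: "u \<ge> 0" using l r by (simp add: u_def)
  have e1: "(2*pi*r) powr \<alpha> = u powr \<alpha> * l powr (-\<alpha>)"
  proof -
    have "2*pi*r = u / l" using l by (simp add: u_def)
    then have "(2*pi*r) powr \<alpha> = u powr \<alpha> / l powr \<alpha>" using l u by (simp add: powr_divide)
    then show ?thesis by (simp add: powr_minus divide_inverse)
  qed
  define y where "y = u^2/(4*pi)"
  have e2: "exp (-pi*l^2*r^2) = exp (-y)"
    by (simp add: y_def u_def power_mult_distrib power2_eq_square field_simps)
  have up: "u powr \<alpha> \<le> 1 + u^2"
  proof (cases "u \<le> 1")
    case True
    then have "u powr \<alpha> \<le> 1" using u \<alpha> by (simp add: powr_le1)
    then show ?thesis by (smt (verit) zero_le_power2)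
  next
    case False
    then have "u powr \<alpha> \<le> u powr 2" using \<alpha> by (intro powr_mono) auto
    then show ?thesis using u by (simp add: powr_numeral)
  qed
  have y0: "y \<ge> 0" by (simp add: y_def)
  have "y * exp (-y) \<le> 1"
  proof -
    have "y \<le> exp y" using exp_ge_add_one_self[of y] by linarith
    then show ?thesis by (simp add: exp_minus field_simps)
  qed
  then have "u^2 * exp (-y) \<le> 4*pi" by (simp add: y_def field_simps)
  moreover have "exp (-y) \<le> 1" using y0 by simp
  ultimately have "(1 + u^2) * exp (-y) \<le> 1 + 4*pi" unfolding distrib_right by linarith
  then have "u powr \<alpha> * exp (-y) \<le> 1 + 4*pi"
    using up by (smt (verit, best) exp_gt_zero mult_right_mono)
  then show ?thesis unfolding e1 e2 using l
    by (smt (verit, best) mult.commute mult.left_commute mult_left_mono powr_ge_zero)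
qed

lemma amgm:
  fixes G P X :: real assumes "X > 0" "G \<ge> 0" "P \<ge> 0"
  shows "G * P \<le> X * G^2 + P^2 / X"
proof -
  have "0 \<le> (X*G - P)^2" by simp
  then have "2*(X*(G*P)) \<le> X^2*G^2 + P^2" by (simp add: power2_eq_square algebra_simps)
  moreover have "0 \<le> X*(G*P)" using assms by simp
  ultimately have h: "X*(G*P) \<le> X^2*G^2 + P^2" by linarith
  have "G*P \<le> (X^2*G^2 + P^2)/X" using h assms by (simp add: pos_le_divide_eq mult.commute)
  also have "\<dots> = X * G^2 + P^2 / X" using assms by (simp add: field_simps power2_eq_square)
  finally show ?thesis .
qed


lemma fourier_gauss_scaled:
  fixes x :: "'a::euclidean_space" assumes l: "l > 0"
  shows "fourier (\<lambda>\<xi>. complex_of_real (l^DIM('a) * exp (-pi*(l^2)*(norm \<xi>)^2))) x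
        = complex_of_real (exp (-pi*(norm x)^2/l^2))"
proof -
  have "fourier (\<lambda>\<xi>. complex_of_real (l^DIM('a) * exp (-pi*(l^2)*(norm \<xi>)^2))) x
     = complex_of_real (l^DIM('a)) * fourier (\<lambda>\<xi>. complex_of_real (exp (-pi*(l^2)*(norm \<xi>)^2))) x"
    unfolding fourier_def by (simp add: mult.assoc)
  also have "\<dots> = complex_of_real (l^DIM('a) * ((1/sqrt (l^2))^DIM('a) * exp (-pi*(norm x)^2/l^2)))"
    using fourier_gauss[of "l^2" x] l by simp
  also have "\<dots> = complex_of_real (exp (-pi*(norm x)^2/l^2))"
    using l by (simp add: power_one_over)
  finally show ?thesis .
qed

lemma key_bound:
  fixes T :: "'a::euclidean_space \<Rightarrow> real"
  assumes \<alpha>: "0 < \<alpha>" "\<alpha> \<le> 2" and sob: "in_homog_sobolev_neg \<alpha> T"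
    and Tnn: "\<And>x. T x \<ge> 0" and Tm[measurable]: "T \<in> borel_measurable lborel"
  shows "\<exists>K<\<infinity>. \<forall>l>0. (\<integral>\<^sup>+x. ennreal (T x * exp (-pi*(norm x)^2/l^2)) \<partial>lborel)
             \<le> ennreal (l powr ((real DIM('a) - \<alpha>)/2)) * K"
proof -
  define d where "d = DIM('a)"
  define s where "s = real d - \<alpha>"
  define M :: real where "M = 1 + 4*pi"
  have M0: "M \<ge> 0" by (simp add: M_def)
  obtain g :: "'a \<Rightarrow> complex" where g: "locally_integrable g"
    and gS: "\<And>\<phi>. \<phi> \<in> schwartz \<Longrightarrow> integrable lborel (\<lambda>\<xi>. g \<xi> * \<phi> \<xi>) \<and>
           (\<integral>x. complex_of_real (T x) * fourier \<phi> x \<partial>lborel) = (\<integral>\<xi>. g \<xi> * \<phi> \<xi> \<partial>lborel)"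
    and gA: "(\<integral>\<^sup>+\<xi>. ennreal ((2 * pi * norm \<xi>) powr (-\<alpha>) * (cmod (g \<xi>))\<^sup>2) \<partial>lborel) < \<infinity>"
    using sob unfolding in_homog_sobolev_neg_def by blast
  have Tint: "\<And>\<phi>. \<phi> \<in> schwartz \<Longrightarrow> integrable lborel (\<lambda>x. complex_of_real (T x) * \<phi> x)"
    using sob unfolding in_homog_sobolev_neg_def by blast
  have gm[measurable]: "g \<in> borel_measurable lborel" using g unfolding locally_integrable_def by blast
  define A where "A = (\<integral>\<^sup>+\<xi>. ennreal ((2 * pi * norm \<xi>) powr (-\<alpha>) * (cmod (g \<xi>))\<^sup>2) \<partial>lborel)"
  have bound: "(\<integral>\<^sup>+x. ennreal (T x * exp (-pi*(norm x)^2/l^2)) \<partial>lborel)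
             \<le> ennreal (l powr (s/2)) * (A + ennreal M)" if l: "l > 0" for l
  proof -
    define \<phi> where "\<phi> = (\<lambda>\<xi>::'a. complex_of_real (l^d * exp (-pi*(l^2)*(norm \<xi>)^2)))"
    define P where "P = (\<lambda>\<xi>::'a. l^d * exp (-pi*(l^2)*(norm \<xi>)^2))"
    define \<psi> where "\<psi> = (\<lambda>x::'a. exp (-pi*(norm x)^2/l^2))"
    have \<phi>S: "\<phi> \<in> schwartz" unfolding \<phi>_def using gauss_schwartz[of "l^2" "l^d"] l by simp
    have \<psi>S: "(\<lambda>x. complex_of_real (\<psi> x)) \<in> schwartz"
      using gauss_schwartz[of "1/l^2" 1] l by (simp add: \<psi>_def)
    have f\<phi>: "fourier \<phi> = (\<lambda>x. complex_of_real (\<psi> x))"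
      using fourier_gauss_scaled[OF l] by (auto simp: \<phi>_def \<psi>_def d_def)
    have intT: "integrable lborel (\<lambda>x. T x * \<psi> x)"
      using Tint[OF \<psi>S] by (subst complex_of_real_integrable_eq[symmetric]) (simp add: of_real_mult)
    have e1: "(\<integral>x. complex_of_real (T x) * fourier \<phi> x \<partial>lborel) = complex_of_real (\<integral>x. T x * \<psi> x \<partial>lborel)"
      unfolding f\<phi> by (simp add: of_real_mult[symmetric] integral_complex_of_real del: of_real_mult)
    have gi: "integrable lborel (\<lambda>\<xi>. g \<xi> * \<phi> \<xi>)" and e2: "(\<integral>\<xi>. g \<xi> * \<phi> \<xi> \<partial>lborel) = complex_of_real (\<integral>x. T x * \<psi> x \<partial>lborel)"
      using gS[OF \<phi>S] e1 by auto
    have \<psi>0: "\<And>x. \<psi> x \<ge> 0" by (simp add: \<psi>_def)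
    have Pm[measurable]: "P \<in> borel_measurable borel" unfolding P_def by measurable
    have P0: "\<And>x. P x \<ge> 0" using l by (simp add: P_def)
    have Snn: "(\<integral>\<^sup>+x. ennreal (T x * exp (-pi*(norm x)^2/l^2)) \<partial>lborel) = ennreal (\<integral>x. T x * \<psi> x \<partial>lborel)"
    proof -
      have "(\<integral>\<^sup>+x. ennreal (T x * exp (-pi*(norm x)^2/l^2)) \<partial>lborel) = (\<integral>\<^sup>+x. ennreal (T x * \<psi> x) \<partial>lborel)"
        by (simp add: \<psi>_def)
      also have "\<dots> = ennreal (\<integral>x. T x * \<psi> x \<partial>lborel)"
        using intT Tnn \<psi>0 by (intro nn_integral_eq_integral) auto
      finally show ?thesis .
    qed
    have I0: "(\<integral>x. T x * \<psi> x \<partial>lborel) \<ge> 0" using Tnn \<psi>0 by (intro integral_nonneg_AE) auto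
    define t where "t = l powr (s/2)"
    have t0: "t > 0" using l by (simp add: t_def)
    define B where "B = (\<integral>\<^sup>+\<xi>. ennreal ((2 * pi * norm \<xi>) powr \<alpha> * (P \<xi>)^2) \<partial>lborel)"
    have "(\<integral>\<^sup>+x. ennreal (T x * exp (-pi*(norm x)^2/l^2)) \<partial>lborel) = ennreal (cmod (\<integral>\<xi>. g \<xi> * \<phi> \<xi> \<partial>lborel))"
      unfolding Snn e2 using I0 by simp
    also have "\<dots> \<le> (\<integral>\<^sup>+\<xi>. ennreal (cmod (g \<xi> * \<phi> \<xi>)) \<partial>lborel)"
      using integral_norm_bound_ennreal[OF gi] by simp
    also have "\<dots> \<le> (\<integral>\<^sup>+\<xi>. ennreal t * ennreal ((2 * pi * norm \<xi>) powr (-\<alpha>) * (cmod (g \<xi>))\<^sup>2)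
          + ennreal (1/t) * ennreal ((2 * pi * norm \<xi>) powr \<alpha> * (P \<xi>)^2) \<partial>lborel)"
    proof (rule nn_integral_mono_AE)
      show "AE \<xi> in lborel. ennreal (cmod (g \<xi> * \<phi> \<xi>)) \<le> ennreal t * ennreal ((2 * pi * norm \<xi>) powr (-\<alpha>) * (cmod (g \<xi>))\<^sup>2)
          + ennreal (1/t) * ennreal ((2 * pi * norm \<xi>) powr \<alpha> * (P \<xi>)^2)"
        using AE_lborel_singleton[of 0]
      proof eventually_elim
        case (elim \<xi>)
        define w where "w = (2 * pi * norm \<xi>) powr (-\<alpha>)"
        have w0: "w > 0" using elim by (simp add: w_def)
        have winv: "(2 * pi * norm \<xi>) powr \<alpha> = 1 / w" using elim by (simp add: w_def powr_minus divide_inverse)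
        have "cmod (g \<xi> * \<phi> \<xi>) = cmod (g \<xi>) * P \<xi>"
          using P0[of \<xi>] l by (simp add: \<phi>_def P_def norm_mult norm_power)
        also have "\<dots> \<le> (t*w) * (cmod (g \<xi>))^2 + (P \<xi>)^2 / (t*w)"
          using t0 w0 P0[of \<xi>] by (intro amgm) auto
        also have "\<dots> = t * (w * (cmod (g \<xi>))^2) + (1/t) * ((2 * pi * norm \<xi>) powr \<alpha> * (P \<xi>)^2)"
          unfolding winv by (simp add: field_simps)
        finally show ?case using t0 w0
          by (simp add: ennreal_plus[symmetric] ennreal_mult[symmetric] w_def del: ennreal_plus)
      qed
    qed
    also have "\<dots> = ennreal t * A + ennreal (1/t) * B"
      unfolding A_def B_def by (subst nn_integral_add) (auto simp: nn_integral_cmult)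
    also have "B \<le> ennreal (M * l powr s)"
    proof -
      have "B \<le> (\<integral>\<^sup>+\<xi>. ennreal (l^(2*d) * (l powr (-\<alpha>) * M)) * ennreal (exp (-pi*l^2*(norm (\<xi>::'a))^2)) \<partial>lborel)"
        unfolding B_def
      proof (rule nn_integral_mono)
        fix \<xi> :: 'a
        have pw: "(2*pi*norm \<xi>) powr \<alpha> * exp (-pi*l^2*(norm \<xi>)^2) \<le> l powr (-\<alpha>) * M"
          unfolding M_def by (rule pw_bound[OF l norm_ge_zero \<alpha>])
        have "(2 * pi * norm \<xi>) powr \<alpha> * (P \<xi>)^2 = l^(2*d) * ((2*pi*norm \<xi>) powr \<alpha> * exp (-pi*l^2*(norm \<xi>)^2)) * exp (-pi*l^2*(norm \<xi>)^2)"
          by (simp add: P_def power_mult_distrib power_mult power2_eq_square)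
        also have "\<dots> \<le> l^(2*d) * (l powr (-\<alpha>) * M) * exp (-pi*l^2*(norm \<xi>)^2)"
          using pw l by (intro mult_right_mono mult_left_mono) auto
        finally show "ennreal ((2 * pi * norm \<xi>) powr \<alpha> * (P \<xi>)^2) \<le> ennreal (l^(2*d) * (l powr (-\<alpha>) * M)) * ennreal (exp (-pi*l^2*(norm \<xi>)^2))"
          using l M0 by (simp add: ennreal_mult[symmetric] ennreal_leI)
      qed
      also have "\<dots> = ennreal (l^(2*d) * (l powr (-\<alpha>) * M)) * ennreal ((1 / sqrt (l^2))^d)"
        using gauss_nn[of "l^2", where 'a='a] l by (subst nn_integral_cmult) (auto simp: d_def)
      also have "\<dots> = ennreal (M * l powr s)"
      proof -
        have "l^(2*d) * (1 / sqrt (l^2))^d = l^d" using l by (simp add: power_mult power2_eq_square power_one_over field_simps)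
        moreover have "l^d * l powr (-\<alpha>) = l powr s"
          using l by (simp add: s_def powr_realpow[symmetric] powr_add[symmetric])
        ultimately have "l^(2*d) * (l powr (-\<alpha>) * M) * (1 / sqrt (l^2))^d = M * l powr s"
          by (metis (no_types, lifting) mult.commute mult.left_commute)
        then show ?thesis using l M0 by (simp add: ennreal_mult[symmetric])
      qed
      finally show ?thesis .
    qed
    then have "ennreal t * A + ennreal (1/t) * B \<le> ennreal t * A + ennreal (1/t) * ennreal (M * l powr s)"
      by (intro add_left_mono mult_left_mono) auto
    also have "ennreal (1/t) * ennreal (M * l powr s) = ennreal t * ennreal M"
    proof -
      have "(1/t) * (M * l powr s) = t * M" using l
        by (simp add: t_def field_simps powr_add[symmetric])
      then show ?thesis using t0 M0 by (simp add: ennreal_mult[symmetric])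
    qed
    finally show ?thesis unfolding t_def by (simp add: distrib_left)

  qed
  show ?thesis
    by (rule exI[of _ "A + ennreal M"]) (use gA bound in \<open>auto simp: A_def s_def d_def\<close>)
qed


lemma pow_powr: "b > 0 \<Longrightarrow> ((b::real)^k) powr a = (b powr a)^k"
  by (simp add: powr_realpow[symmetric] powr_powr powr_power mult.commute)

lemma cball_sets[measurable]: "cball (c::'a::euclidean_space) r \<in> sets borel" by simp

lemma ball_bound:
  fixes T :: "'a::euclidean_space \<Rightarrow> real"
  assumes Tnn: "\<And>x. T x \<ge> 0" and Tm[measurable]: "T \<in> borel_measurable lborel"
    and bound: "\<forall>l>0. (\<integral>\<^sup>+x. ennreal (T x * exp (-pi*(norm x)^2/l^2)) \<partial>lborel) \<le> ennreal (l powr (s/2)) * K"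
    and l: "l > 0"
  shows "(\<integral>\<^sup>+x. ennreal (T x * indicator (cball 0 l) x) \<partial>lborel) \<le> ennreal (exp pi) * (ennreal (l powr (s/2)) * K)"
proof -
  have "(\<integral>\<^sup>+x. ennreal (T x * indicator (cball 0 l) x) \<partial>lborel)
     \<le> (\<integral>\<^sup>+x. ennreal (exp pi) * ennreal (T x * exp (-pi*(norm x)^2/l^2)) \<partial>lborel)"
  proof (rule nn_integral_mono)
    fix x :: 'a
    show "ennreal (T x * indicator (cball 0 l) x) \<le> ennreal (exp pi) * ennreal (T x * exp (-pi*(norm x)^2/l^2))"
    proof (cases "x \<in> cball 0 l")
      case True
      then have "norm x \<le> l" by simp
      then have "(norm x)^2/l^2 \<le> 1" using l by (simp add: divide_le_eq_1 power_mono)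
      then have "pi * ((norm x)^2/l^2) \<le> pi * 1" by (intro mult_left_mono) auto
      then have "exp (-pi) \<le> exp (-pi*(norm x)^2/l^2)" by simp
      then have "1 \<le> exp pi * exp (-pi*(norm x)^2/l^2)"
        by (metis exp_gt_zero exp_minus_inverse mult_left_mono order_less_imp_le)
      then have "T x \<le> exp pi * (T x * exp (-pi*(norm x)^2/l^2))"
        using Tnn[of x] by (metis mult.commute mult.left_commute mult_left_mono mult.right_neutral)
      then show ?thesis using True Tnn[of x] by (simp add: ennreal_mult[symmetric] ennreal_leI)
    qed simp
  qed
  also have "\<dots> = ennreal (exp pi) * (\<integral>\<^sup>+x. ennreal (T x * exp (-pi*(norm x)^2/l^2)) \<partial>lborel)"
    by (rule nn_integral_cmult) measurable
  also have "\<dots> \<le> ennreal (exp pi) * (ennreal (l powr (s/2)) * K)"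
    using bound l by (intro mult_left_mono) auto
  finally show ?thesis .
qed

lemma dyadic_cover:
  fixes r s :: real assumes r: "r \<ge> 0" and s: "s \<ge> 0"
  shows "\<exists>k::nat. r \<le> 2^k \<and> (1 + r) powr (-s) \<le> 2 powr s * (2 powr (-s))^k"
proof -
  obtain n :: nat where "r \<le> 2^n" using real_arch_pow[of 2 r] by (auto intro: less_imp_le)
  define k where "k = (LEAST k::nat. r \<le> 2^k)"
  have k1: "r \<le> 2^k" unfolding k_def by (rule LeastI[of _ n]) fact
  have k2: "2^k \<le> 2 * (1 + r)"
  proof (cases k)
    case 0 then show ?thesis using r by simp
  next
    case (Suc j)
    then have "\<not> r \<le> 2^j" unfolding k_def by (metis Least_le Suc_n_not_le_n k_def)
    then show ?thesis using Suc by simp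
  qed
  have "(1 + r) powr (-s) \<le> (2^k / 2) powr (-s)"
    using k2 s r by (intro powr_mono2') auto
  also have "\<dots> = ((2::real)^k) powr (-s) / 2 powr (-s)" by (rule powr_divide)
  also have "\<dots> = 2 powr s * (2 powr (-s))^k"
    by (simp only: pow_powr[of 2] powr_minus divide_inverse inverse_inverse_eq) (simp add: power_inverse mult.commute)
  finally show ?thesis using k1 by blast
qed

lemma weighted_finite:
  fixes T :: "'a::euclidean_space \<Rightarrow> real"
  assumes Tnn: "\<And>x. T x \<ge> 0" and Tm[measurable]: "T \<in> borel_measurable lborel"
    and bound: "\<forall>l>0. (\<integral>\<^sup>+x. ennreal (T x * exp (-pi*(norm x)^2/l^2)) \<partial>lborel) \<le> ennreal (l powr (s/2)) * K"
    and K: "K < \<infinity>" and s: "s \<ge> 0"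
  shows "(\<integral>\<^sup>+x. ennreal (T x * (1 + norm x) powr (-s)) \<partial>lborel) < \<infinity>"
proof (cases "s = 0")
  case True
  define f where "f = (\<lambda>n::nat. \<lambda>x::'a. ennreal (T x * indicator (cball 0 (real n + 1)) x))"
  have inc: "incseq f"
    unfolding f_def
  proof (intro monoI le_funI)
    fix m n :: nat and x :: 'a assume "m \<le> n"
    then show "ennreal (T x * indicator (cball 0 (real m + 1)) x) \<le> ennreal (T x * indicator (cball 0 (real n + 1)) x)"
      using Tnn[of x] by (auto simp: indicator_def)
  qed
  have sup: "(SUP n. f n x) = ennreal (T x)" for x
  proof (rule antisym)
    show "(SUP n. f n x) \<le> ennreal (T x)"
      unfolding f_def using Tnn[of x] by (intro SUP_least) (auto simp: indicator_def)
    have "f (nat \<lceil>norm x\<rceil>) x = ennreal (T x)"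
      unfolding f_def by (simp add: indicator_def) linarith
    then show "ennreal (T x) \<le> (SUP n. f n x)" by (metis SUP_upper UNIV_I)
  qed
  have "(\<integral>\<^sup>+x. ennreal (T x * (1 + norm x) powr (-s)) \<partial>lborel) = (\<integral>\<^sup>+x. (SUP n. f n x) \<partial>lborel)"
    using True by (simp add: sup add_nonneg_eq_0_iff)
  also have "\<dots> = (SUP n. integral\<^sup>N lborel (f n))"
    by (rule nn_integral_monotone_convergence_SUP[OF inc]) (unfold f_def, measurable)
  also have "\<dots> \<le> ennreal (exp pi) * K"
  proof (rule SUP_least)
    fix n :: nat
    show "integral\<^sup>N lborel (f n) \<le> ennreal (exp pi) * K"
      using ball_bound[OF Tnn Tm bound, of "real n + 1"] True by (simp add: f_def)
  qed
  also have "\<dots> < \<infinity>" using K by (simp add: ennreal_mult_less_top)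
  finally show ?thesis .
next
  case False
  then have s: "s > 0" using s by simp
  define q where "q = 2 powr (-s/2)"
  have q: "0 < q" "q < 1" using s by (auto simp: q_def powr_less_one)
  define c where "c = (\<lambda>k::nat. 2 powr s * (2 powr (-s))^k)"
  define f where "f = (\<lambda>k::nat. \<lambda>x::'a. ennreal (c k) * ennreal (T x * indicator (cball 0 (2^k)) x))"
  have "(\<integral>\<^sup>+x. ennreal (T x * (1 + norm x) powr (-s)) \<partial>lborel) \<le> (\<integral>\<^sup>+x. (\<Sum>k. f k x) \<partial>lborel)"
  proof (rule nn_integral_mono)
    fix x :: 'a
    obtain k where k: "norm x \<le> 2^k" "(1 + norm x) powr (-s) \<le> c k"
      using dyadic_cover[OF norm_ge_zero, of s] s unfolding c_def by auto
    have "ennreal (T x * (1 + norm x) powr (-s)) \<le> f k x"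
      using k Tnn[of x] by (auto simp: f_def ennreal_mult[symmetric] c_def mult.commute intro!: ennreal_leI mult_left_mono)
    also have "f k x \<le> (\<Sum>k. f k x)"
      using sum_le_suminf[OF summableI, of "{k}" "\<lambda>k. f k x"] by simp
    finally show "ennreal (T x * (1 + norm x) powr (-s)) \<le> (\<Sum>k. f k x)" .
  qed
  also have "\<dots> = (\<Sum>k. integral\<^sup>N lborel (f k))"
    by (rule nn_integral_suminf) (unfold f_def, measurable)
  also have "\<dots> \<le> (\<Sum>k. ennreal (exp pi * 2 powr s * q^k) * K)"
  proof (intro suminf_le allI summableI)
    fix k :: nat
    have "integral\<^sup>N lborel (f k) = ennreal (c k) * (\<integral>\<^sup>+x. ennreal (T x * indicator (cball 0 (2^k)) x) \<partial>lborel)"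
      unfolding f_def by (rule nn_integral_cmult) measurable
    also have "\<dots> \<le> ennreal (c k) * (ennreal (exp pi) * (ennreal ((2^k) powr (s/2)) * K))"
      by (intro mult_left_mono ball_bound[OF Tnn Tm bound]) auto
    also have "\<dots> = ennreal (c k * exp pi * (2^k) powr (s/2)) * K"
      by (simp add: c_def ennreal_mult ac_simps)
    also have "c k * exp pi * (2^k) powr (s/2) = exp pi * 2 powr s * q^k"
    proof -
      have "(2::real)^k = 2 powr (real k)" by (simp add: powr_realpow)
      then have "((2::real)^k) powr (s/2) = 2 powr (real k * (s/2))" by (simp add: powr_powr)
      moreover have "(2 powr (-s))^k = (2::real) powr (real k * (-s))" by (rule powr_power) simp
      moreover have "q^k = (2::real) powr (real k * (-s/2))" unfolding q_def by (rule powr_power) simp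
      ultimately show ?thesis
        by (simp add: c_def powr_add[symmetric] algebra_simps)
    qed
    finally show "integral\<^sup>N lborel (f k) \<le> ennreal (exp pi * 2 powr s * q^k) * K" .
  qed
  also have "\<dots> = (\<Sum>k. ennreal (exp pi * 2 powr s * q^k)) * K"
    by (rule ennreal_suminf_multc)
  also have "(\<Sum>k. ennreal (exp pi * 2 powr s * q^k)) = ennreal (\<Sum>k. exp pi * 2 powr s * q^k)"
    using q by (intro suminf_ennreal2) (auto intro!: summable_mult summable_geometric)
  also have "ennreal (\<Sum>k. exp pi * 2 powr s * q^k) * K < \<infinity>"
    using K by (simp add: ennreal_mult_less_top)
  finally show ?thesis .
qed



lemma local_int:
  assumes s: "0 \<le> s" "s < real DIM('a)" and \<rho>: "\<rho> > 0"
  shows "(\<integral>\<^sup>+z. ennreal (indicator (cball (0::'a::euclidean_space) \<rho>) z * norm z powr (-s)) \<partial>lborel) < \<infinity>"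
proof -
  define d where "d = real DIM('a)"
  define rk where "rk = (\<lambda>k::nat. \<rho> * (1/2)^k)"
  have rk0: "rk k > 0" for k using \<rho> by (simp add: rk_def)
  define f where "f = (\<lambda>k::nat. \<lambda>z::'a. ennreal ((rk (Suc k)) powr (-s)) * indicator (cball 0 (rk k)) z)"
  have "(\<integral>\<^sup>+z. ennreal (indicator (cball (0::'a) \<rho>) z * norm z powr (-s)) \<partial>lborel) \<le> (\<integral>\<^sup>+z. (\<Sum>k. f k z) \<partial>lborel)"
  proof (rule nn_integral_mono)
    fix z :: 'a
    show "ennreal (indicator (cball (0::'a) \<rho>) z * norm z powr (-s)) \<le> (\<Sum>k. f k z)"
    proof (cases "z \<noteq> 0 \<and> norm z \<le> \<rho>")
      case False then show ?thesis by (auto simp: indicator_def)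
    next
      case True
      then have z: "norm z > 0" "norm z \<le> \<rho>" by auto
      obtain n :: nat where n: "\<rho> / norm z < 2^n" using real_arch_pow[of 2 "\<rho> / norm z"] by auto
      have "rk n < norm z"
      proof -
        have "\<rho> < norm z * 2^n" using n z by (simp add: divide_less_eq mult.commute)
        then show ?thesis by (simp add: rk_def power_one_over field_simps)
      qed
      then have ex: "rk (Suc n) < norm z" using rk0[of n] by (simp add: rk_def)
      define k where "k = (LEAST k. rk (Suc k) < norm z)"
      have k1: "rk (Suc k) < norm z" unfolding k_def by (rule LeastI[of _ n]) (rule ex)
      have k2: "norm z \<le> rk k"
      proof (cases k)
        case 0 then show ?thesis using z by (simp add: rk_def)
      next
        case (Suc j)
        then have "\<not> rk (Suc j) < norm z" unfolding k_def by (metis Least_le Suc_n_not_le_n k_def)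
        then show ?thesis using Suc by simp
      qed
      have "norm z powr (-s) \<le> rk (Suc k) powr (-s)"
        using k1 rk0 s by (intro powr_mono2') auto
      then have "ennreal (indicator (cball (0::'a) \<rho>) z * norm z powr (-s)) \<le> f k z"
        using z k2 by (auto simp: f_def indicator_def ennreal_leI)
      also have "f k z \<le> (\<Sum>k. f k z)"
        using sum_le_suminf[OF summableI, of "{k}" "\<lambda>k. f k z"] by simp
      finally show ?thesis .
    qed
  qed
  also have "\<dots> = (\<Sum>k. integral\<^sup>N lborel (f k))"
    by (rule nn_integral_suminf) (unfold f_def, measurable)
  also have "\<dots> = (\<Sum>k. ennreal (2 powr s * unit_ball_vol d * \<rho> powr (d - s) * (2 powr (s - d))^k))"
  proof (intro suminf_cong)
    fix k
    have "integral\<^sup>N lborel (f k) = ennreal ((rk (Suc k)) powr (-s)) * emeasure lborel (cball (0::'a) (rk k))"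
      unfolding f_def by (simp add: nn_integral_cmult_indicator)
    also have "\<dots> = ennreal ((rk (Suc k)) powr (-s) * (unit_ball_vol d * (rk k)^DIM('a)))"
      using rk0[of k] by (simp add: emeasure_cball ennreal_mult d_def)
    also have "(rk (Suc k)) powr (-s) * (unit_ball_vol d * (rk k)^DIM('a)) = 2 powr s * unit_ball_vol d * \<rho> powr (d - s) * (2 powr (s - d))^k"
    proof -
      have a1: "rk (Suc k) = rk k / 2" by (simp add: rk_def)
      have a2: "(rk k / 2) powr (-s) = (rk k) powr (-s) * 2 powr s"
      proof -
        have "(rk k / 2) powr (-s) = (rk k) powr (-s) / 2 powr (-s)" by (rule powr_divide)
        then show ?thesis by (simp only: powr_minus[of 2 s] divide_inverse inverse_inverse_eq)
      qed
      have a3: "(rk k)^DIM('a) = (rk k) powr d"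
        using rk0[of k] by (simp add: d_def powr_realpow)
      have a4: "(rk k) powr (-s) * (rk k) powr d = (rk k) powr (d - s)"
        by (simp add: powr_add[symmetric])
      have a5: "(rk k) powr (d - s) = \<rho> powr (d - s) * (2 powr (s - d))^k"
      proof -
        have "(rk k) powr (d - s) = \<rho> powr (d - s) * ((1/2)^k) powr (d - s)"
          unfolding rk_def using \<rho> by (simp add: powr_mult)
        also have "((1/2::real)^k) powr (d - s) = ((1/2) powr (d - s))^k" by (rule pow_powr) simp
        also have "(1/2::real) powr (d - s) = 2 powr (s - d)"
          by (simp add: powr_divide powr_minus_divide[symmetric])
        finally show ?thesis .
      qed
      have "rk k powr - s * 2 powr s * (unit_ball_vol d * rk k powr d) = 2 powr s * unit_ball_vol d * (rk k powr - s * rk k powr d)"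
        by (simp only: ac_simps)
      also have "\<dots> = 2 powr s * unit_ball_vol d * \<rho> powr (d - s) * (2 powr (s - d))^k"
        unfolding a4 a5 by (simp only: ac_simps)
      finally show ?thesis unfolding a1 a2 a3 .
    qed
    finally show "integral\<^sup>N lborel (f k) = ennreal (2 powr s * unit_ball_vol d * \<rho> powr (d - s) * (2 powr (s - d))^k)" .
  qed
  also have "\<dots> < \<infinity>"
  proof -
    have q: "2 powr (s - d) < 1" using s by (simp add: d_def powr_less_one)
    have "(\<Sum>k. ennreal (2 powr s * unit_ball_vol d * \<rho> powr (d - s) * (2 powr (s - d))^k))
       = ennreal (\<Sum>k. 2 powr s * unit_ball_vol d * \<rho> powr (d - s) * (2 powr (s - d))^k)"
      using q by (intro suminf_ennreal2) (auto intro!: summable_mult summable_geometric simp: d_def)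
    then show ?thesis by simp
  qed
  finally show ?thesis .
qed


lemma translate_nn:
  fixes y :: "'a::euclidean_space"
  assumes [measurable]: "f \<in> borel_measurable borel"
  shows "(\<integral>\<^sup>+x. f x \<partial>lborel) = (\<integral>\<^sup>+z. f (y + z) \<partial>lborel)"
proof -
  have "(\<integral>\<^sup>+x. f x \<partial>lborel) = (\<integral>\<^sup>+x. f x \<partial>(distr lborel borel ((+) y)))"
    by (simp add: lborel_distr_plus)
  also have "\<dots> = (\<integral>\<^sup>+z. f (y + z) \<partial>lborel)"
    by (subst nn_integral_distr) auto
  finally show ?thesis .
qed

lemma J_bound:
  fixes y :: "'a::euclidean_space"
  assumes s: "0 < s" "s < real DIM('a)" and R: "R \<ge> 1"
  defines "L \<equiv> (\<integral>\<^sup>+z. ennreal (indicator (cball (0::'a) (3*R)) z * norm z powr (-s)) \<partial>lborel)"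
  shows "(\<integral>\<^sup>+x. ennreal (indicator (cball (0::'a) R) x * norm (x - y) powr (-s)) \<partial>lborel)
     \<le> (ennreal (4 powr s) * emeasure lborel (cball (0::'a) R) + L * ennreal ((1 + 2*R) powr s)) * ennreal ((1 + norm y) powr (-s))"
proof (cases "norm y \<ge> 2*R")
  case True
  have "(\<integral>\<^sup>+x. ennreal (indicator (cball (0::'a) R) x * norm (x - y) powr (-s)) \<partial>lborel)
     \<le> (\<integral>\<^sup>+x. ennreal (4 powr s * (1 + norm y) powr (-s)) * indicator (cball (0::'a) R) x \<partial>lborel)"
  proof (rule nn_integral_mono)
    fix x :: 'a
    show "ennreal (indicator (cball (0::'a) R) x * norm (x - y) powr (-s)) \<le> ennreal (4 powr s * (1 + norm y) powr (-s)) * indicator (cball (0::'a) R) x"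
    proof (cases "x \<in> cball 0 R")
      case xin: True
      then have "norm x \<le> R" by simp
      moreover have "norm y - norm x \<le> norm (x - y)" by (metis norm_minus_commute norm_triangle_ineq2)
      ultimately have "1 + norm y \<le> 4 * norm (x - y)" using True R by linarith
      then have "(1 + norm y) / 4 \<le> norm (x - y)" by simp
      moreover have "(1 + norm y) / 4 > 0" by (intro divide_pos_pos add_pos_nonneg) auto
      ultimately have "norm (x - y) powr (-s) \<le> ((1 + norm y) / 4) powr (-s)"
        using s by (intro powr_mono2') auto
      also have "\<dots> = 4 powr s * (1 + norm y) powr (-s)"
      proof -
        have "((1 + norm y) / 4) powr (-s) = (1 + norm y) powr (-s) / 4 powr (-s)" by (rule powr_divide)
        then show ?thesis by (simp only: powr_minus[of 4 s] divide_inverse inverse_inverse_eq mult.commute)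
      qed
      finally show ?thesis using xin by (simp add: ennreal_leI)
    qed simp
  qed
  also have "\<dots> = ennreal (4 powr s * (1 + norm y) powr (-s)) * emeasure lborel (cball (0::'a) R)"
    by (simp add: nn_integral_cmult_indicator)
  also have "\<dots> = ennreal (4 powr s) * emeasure lborel (cball (0::'a) R) * ennreal ((1 + norm y) powr (-s))"
    by (simp add: ennreal_mult ac_simps)
  also have "\<dots> \<le> (ennreal (4 powr s) * emeasure lborel (cball (0::'a) R) + L * ennreal ((1 + 2*R) powr s)) * ennreal ((1 + norm y) powr (-s))"
    by (intro mult_right_mono add_increasing2) auto
  finally show ?thesis .
next
  case False
  have "(\<integral>\<^sup>+x. ennreal (indicator (cball (0::'a) R) x * norm (x - y) powr (-s)) \<partial>lborel)
     \<le> (\<integral>\<^sup>+x. ennreal (indicator (cball y (3*R)) x * norm (x - y) powr (-s)) \<partial>lborel)"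
  proof (rule nn_integral_mono)
    fix x :: 'a
    have "x \<in> cball 0 R \<Longrightarrow> x \<in> cball y (3*R)"
      using False by (simp add: dist_norm) (smt (verit) norm_minus_commute norm_triangle_ineq4)
    then show "ennreal (indicator (cball (0::'a) R) x * norm (x - y) powr (-s)) \<le> ennreal (indicator (cball y (3*R)) x * norm (x - y) powr (-s))"
      by (auto simp: indicator_def intro!: ennreal_leI)
  qed
  also have "\<dots> = L"
    unfolding L_def by (subst translate_nn[of _ y]) (auto simp: indicator_def dist_norm)
  also have "L \<le> L * ennreal ((1 + 2*R) powr s * (1 + norm y) powr (-s))"
  proof -
    have "(1 + norm y) powr s \<le> (1 + 2*R) powr s" using False s by (intro powr_mono2) auto
    then have "1 \<le> (1 + 2*R) powr s * (1 + norm y) powr (-s)"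
      using norm_ge_zero[of y] by (simp add: powr_minus divide_inverse[symmetric] le_divide_eq add_nonneg_eq_0_iff)
    then have "ennreal 1 \<le> ennreal ((1 + 2*R) powr s * (1 + norm y) powr (-s))" by (rule ennreal_leI)
    then have "L * 1 \<le> L * ennreal ((1 + 2*R) powr s * (1 + norm y) powr (-s))"
      by (intro mult_left_mono) auto
    then show ?thesis by simp
  qed
  also have "\<dots> = L * ennreal ((1 + 2*R) powr s) * ennreal ((1 + norm y) powr (-s))"
    by (simp add: ennreal_mult ac_simps)
  also have "\<dots> \<le> (ennreal (4 powr s) * emeasure lborel (cball (0::'a) R) + L * ennreal ((1 + 2*R) powr s)) * ennreal ((1 + norm y) powr (-s))"
    by (intro mult_right_mono add_increasing) auto
  finally show ?thesis .
qed

lemma riesz_ae: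
  fixes T :: "'a::euclidean_space \<Rightarrow> real"
  assumes Tnn: "\<And>x. T x \<ge> 0" and Tm[measurable]: "T \<in> borel_measurable lborel"
    and s: "0 < s" "s < real DIM('a)"
    and W: "(\<integral>\<^sup>+y. ennreal (T y * (1 + norm y) powr (-s)) \<partial>lborel) < \<infinity>"
  shows "AE x in lborel. (\<integral>\<^sup>+y. ennreal (norm (x - y) powr (-s) * T y) \<partial>lborel) < \<infinity>"
proof -
  have Tb[measurable]: "T \<in> borel_measurable borel" using Tm by simp
  define F where "F = (\<lambda>x. \<integral>\<^sup>+y. ennreal (norm (x - y) powr (-s) * T y) \<partial>lborel)"
  have loc: "AE x in lborel. x \<in> cball 0 (real n + 1) \<longrightarrow> F x < \<infinity>" for n :: nat
  proof -
    define R where "R = real n + 1"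
    have R: "R \<ge> 1" by (simp add: R_def)
    define L where "L = (\<integral>\<^sup>+z. ennreal (indicator (cball (0::'a) (3*R)) z * norm z powr (-s)) \<partial>lborel)"
    define C where "C = ennreal (4 powr s) * emeasure lborel (cball (0::'a) R) + L * ennreal ((1 + 2*R) powr s)"
    have L: "L < \<infinity>" unfolding L_def using s R by (intro local_int) auto
    have C: "C < \<infinity>" unfolding C_def using L emeasure_lborel_cball_finite[of "0::'a" R]
      by (simp add: ennreal_mult_less_top)
    have meas: "(\<lambda>(x, y). ennreal (indicator (cball (0::'a) R) x * (norm (x - y) powr (-s) * T y))) \<in> borel_measurable (lborel \<Otimes>\<^sub>M lborel)"
      by measurable
    have "(\<integral>\<^sup>+x. ennreal (indicator (cball 0 R) x) * F x \<partial>lborel)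
        = (\<integral>\<^sup>+x. (\<integral>\<^sup>+y. ennreal (indicator (cball (0::'a) R) x * (norm (x - y) powr (-s) * T y)) \<partial>lborel) \<partial>lborel)"
    proof (rule nn_integral_cong)
      fix x :: 'a
      have "ennreal (indicator (cball 0 R) x) * F x = (\<integral>\<^sup>+y. ennreal (indicator (cball (0::'a) R) x) * ennreal (norm (x - y) powr (-s) * T y) \<partial>lborel)"
        unfolding F_def by (rule nn_integral_cmult[symmetric]) measurable
      then show "ennreal (indicator (cball 0 R) x) * F x = (\<integral>\<^sup>+y. ennreal (indicator (cball (0::'a) R) x * (norm (x - y) powr (-s) * T y)) \<partial>lborel)"
        by (simp add: ennreal_mult Tnn)
    qed
    also have "\<dots> = (\<integral>\<^sup>+y. (\<integral>\<^sup>+x. ennreal (indicator (cball (0::'a) R) x * (norm (x - y) powr (-s) * T y)) \<partial>lborel) \<partial>lborel)"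
      using lborel_pair.Fubini'[OF meas] by simp
    also have "\<dots> = (\<integral>\<^sup>+y. ennreal (T y) * (\<integral>\<^sup>+x. ennreal (indicator (cball (0::'a) R) x * norm (x - y) powr (-s)) \<partial>lborel) \<partial>lborel)"
    proof (rule nn_integral_cong)
      fix y :: 'a
      have "(\<integral>\<^sup>+x. ennreal (indicator (cball (0::'a) R) x * (norm (x - y) powr (-s) * T y)) \<partial>lborel)
         = (\<integral>\<^sup>+x. ennreal (T y) * ennreal (indicator (cball (0::'a) R) x * norm (x - y) powr (-s)) \<partial>lborel)"
        using Tnn[of y] by (intro nn_integral_cong) (simp add: ennreal_mult[symmetric] ac_simps)
      also have "\<dots> = ennreal (T y) * (\<integral>\<^sup>+x. ennreal (indicator (cball (0::'a) R) x * norm (x - y) powr (-s)) \<partial>lborel)"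
        by (rule nn_integral_cmult) measurable
      finally show "(\<integral>\<^sup>+x. ennreal (indicator (cball (0::'a) R) x * (norm (x - y) powr (-s) * T y)) \<partial>lborel)
         = ennreal (T y) * (\<integral>\<^sup>+x. ennreal (indicator (cball (0::'a) R) x * norm (x - y) powr (-s)) \<partial>lborel)" .
    qed
    also have "\<dots> \<le> (\<integral>\<^sup>+y. C * ennreal (T y * (1 + norm y) powr (-s)) \<partial>lborel)"
    proof (rule nn_integral_mono)
      fix y :: 'a
      have "ennreal (T y) * (\<integral>\<^sup>+x. ennreal (indicator (cball (0::'a) R) x * norm (x - y) powr (-s)) \<partial>lborel)
          \<le> ennreal (T y) * (C * ennreal ((1 + norm y) powr (-s)))"
        unfolding C_def L_def using J_bound[OF s R, of y] by (intro mult_left_mono) auto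
      then show "ennreal (T y) * (\<integral>\<^sup>+x. ennreal (indicator (cball (0::'a) R) x * norm (x - y) powr (-s)) \<partial>lborel)
          \<le> C * ennreal (T y * (1 + norm y) powr (-s))"
        using Tnn[of y] by (simp add: ennreal_mult ac_simps)
    qed
    also have "\<dots> = C * (\<integral>\<^sup>+y. ennreal (T y * (1 + norm y) powr (-s)) \<partial>lborel)"
      by (rule nn_integral_cmult) measurable
    also have "\<dots> < \<infinity>" using C W by (simp add: ennreal_mult_less_top)
    finally have fin: "(\<integral>\<^sup>+x. ennreal (indicator (cball 0 R) x) * F x \<partial>lborel) \<noteq> \<infinity>" by simp
    have Fm: "F \<in> borel_measurable lborel"
      unfolding F_def by measurable
    have "AE x in lborel. ennreal (indicator (cball 0 R) x) * F x \<noteq> \<infinity>"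
      by (rule nn_integral_PInf_AE[OF _ fin]) (use Fm in measurable)
    then show ?thesis
      by eventually_elim (auto simp: R_def indicator_def top.not_eq_extremum)
  qed
  have "AE x in lborel. \<forall>n::nat. x \<in> cball 0 (real n + 1) \<longrightarrow> F x < \<infinity>"
    unfolding AE_all_countable using loc by blast
  then show ?thesis
  proof eventually_elim
    case (elim x)
    obtain n :: nat where "norm x \<le> real n" using real_arch_simple by blast
    then have "x \<in> cball 0 (real n + 1)" by simp
    then show ?case using elim unfolding F_def by blast
  qed
qed


theorem mainTheorem8:
  fixes T :: "'a::euclidean_space \<Rightarrow> real" and \<alpha> :: real
  assumes "DIM('a) \<ge> 2"
    and "0 < \<alpha>" and "\<alpha> \<le> 2"
    and "locally_integrable T"
    and "in_homog_sobolev_neg \<alpha> T"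
    and "\<forall>x. T x \<ge> 0"
  shows "(AE x in lborel. (\<integral>\<^sup>+y. ennreal (riesz_kernel \<alpha> (x - y) * T y) \<partial>lborel) < \<infinity>)
       \<and> (\<integral>\<^sup>+x. ennreal (T x * (1 + norm x) powr (-(real DIM('a) - \<alpha>))) \<partial>lborel) < \<infinity>"
proof -
  note d = assms(1) and \<alpha> = assms(2,3) and sob = assms(5)
  have Tnn: "\<And>x. T x \<ge> 0" using assms(6) by blast
  have Tm[measurable]: "T \<in> borel_measurable lborel" using assms(4) unfolding locally_integrable_def by blast
  define s where "s = real DIM('a) - \<alpha>"
  have s0: "s \<ge> 0" using d \<alpha> unfolding s_def by linarith
  have sd: "s < real DIM('a)" using \<alpha> unfolding s_def by linarith
  obtain K where K: "K < \<infinity>" and bound: "\<forall>l>0. (\<integral>\<^sup>+x. ennreal (T x * exp (-pi*(norm x)^2/l^2)) \<partial>lborel)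
             \<le> ennreal (l powr ((real DIM('a) - \<alpha>)/2)) * K"
    using key_bound[OF \<alpha> sob Tnn Tm] by blast
  have W: "(\<integral>\<^sup>+x. ennreal (T x * (1 + norm x) powr (-s)) \<partial>lborel) < \<infinity>"
    by (rule weighted_finite[OF Tnn Tm _ K s0]) (use bound in \<open>simp add: s_def\<close>)
  have AE: "AE x in lborel. (\<integral>\<^sup>+y. ennreal (riesz_kernel \<alpha> (x - y) * T y) \<partial>lborel) < \<infinity>"
  proof (cases "s = 0")
    case True
    then have "riesz_const DIM('a) \<alpha> = 0" unfolding riesz_const_def s_def by simp
    then show ?thesis by (simp add: riesz_kernel_def)
  next
    case False
    then have sp: "s > 0" using s0 by simp
    define c where "c = riesz_const DIM('a) \<alpha>"
    have ae: "AE x in lborel. (\<integral>\<^sup>+y. ennreal (norm (x - y) powr (-s) * T y) \<partial>lborel) < \<infinity>"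
      by (rule riesz_ae[OF Tnn Tm sp sd W])
    then show ?thesis
    proof eventually_elim
      case (elim x)
      have "(\<integral>\<^sup>+y. ennreal (riesz_kernel \<alpha> (x - y) * T y) \<partial>lborel)
          \<le> (\<integral>\<^sup>+y. ennreal \<bar>c\<bar> * ennreal (norm (x - y) powr (-s) * T y) \<partial>lborel)"
      proof (rule nn_integral_mono)
        fix y
        have "c * norm (x - y) powr (-s) * T y \<le> \<bar>c\<bar> * (norm (x - y) powr (-s) * T y)"
          using Tnn[of y] by (simp add: mult.assoc mult_right_mono)
        then show "ennreal (riesz_kernel \<alpha> (x - y) * T y) \<le> ennreal \<bar>c\<bar> * ennreal (norm (x - y) powr (-s) * T y)"
          using Tnn[of y] by (simp add: riesz_kernel_def c_def s_def ennreal_mult[symmetric] ennreal_leI)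
      qed
      also have "\<dots> = ennreal \<bar>c\<bar> * (\<integral>\<^sup>+y. ennreal (norm (x - y) powr (-s) * T y) \<partial>lborel)"
        by (rule nn_integral_cmult) measurable
      also have "\<dots> < \<infinity>" using elim by (simp add: ennreal_mult_less_top)
      finally show ?case .
    qed
  qed
  show ?thesis using AE W by (simp add: s_def)
qed


end
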